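(* Assume that for every $y\in\mathcal Y$ the map $u\mapsto\ell(y,u)$ is convex and twice continuously differentiable, and that for every $y$ the map $u\mapsto s(y,u)$ is $\gamma$-Lipschitz continuous for some $\gamma\in(0,\infty)$. Then for every $y\in\mathcal Y$, $$|S_{\lambda;D^y}(X_i,Y_i)-\tilde S_{\lambda;D^y}(X_i,Y_i)|\le\tau^{(1)}_{\lambda;i}(y)\ (1\le i\le n),\qquad |S_{\lambda;D^y}(X_{n+1},y)-\tilde S_{\lambda;D^y}(X_{n+1},y)|\le\tau^{(1)}_{\lambda;n+1}(y),$$ where for every $i\in\{1,\dots,n+1\}$, $\tau^{(1)}_{\lambda;i}(y)=\sqrt{K_{i,i}}\sqrt{K_{n+1,n+1}}\frac{\gamma\rho^{(1)}_\lambda(y)}{\lambda(n+1)}$ with $\rho^{(1)}_\lambda(y)=\frac12\big|-\partial_2\ell(z,\hat f_{\lambda;D^z}(X_{n+1}))+\partial_2\ell(y,\hat f_{\lambda;D^z}(X_{n+1}))\big|$.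
   Context: Let $\mathcal X\subset\mathbb R^d$, $\mathcal Y\subset\mathbb R$, $D=\{(X_1,Y_1),\dots,(X_n,Y_n)\}$ i.i.d. with distribution $P$ on $\mathcal X\times\mathcal Y$, $(X_{n+1},Y_{n+1})\sim P$ independent. For $y\in\mathcal Y$, $D^y=D\cup\{(X_{n+1},y)\}$. $\mathcal H$ is an RKHS of functions $\mathcal X\to\mathbb R$ with kernel $\kappa_{\mathcal H}$; $K=(\kappa_{\mathcal H}(X_i,X_j))_{1\le i,j\le n+1}$. For a loss $\ell$ and $\lambda>0$, $\hat f_{\lambda;D^y}$ minimizes $\frac1{n+1}\sum_{(x,y')\in D^y}\ell(y',f(x))+\lambda\|f\|^2_{\mathcal H}$ over $\mathcal H$. For $s:\mathcal Y\times\mathcal Y\to\mathbb R_+$: $S_{\lambda;D^y}(X_i,Y_i)=s(Y_i,\hat f_{\lambda;D^y}(X_i))$ ($i\le n$), $S_{\lambda;D^y}(X_{n+1},y)=s(y,\hat f_{\lambda;D^y}(X_{n+1}))$. A point $z\in\mathcal Y$ is fixed and $\tilde S_{\lambda;D^y}(X_i,Y_i)=s(Y_i,\hat f_{\lambda;D^z}(X_i))$ ($i\le n$), $\tilde S_{\lambda;D^y}(X_{n+1},y)=s(y,\hat f_{\lambda;D^z}(X_{n+1}))$. $\partial_2\ell$ is the derivative in the second argument. *)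

theory Defs
  imports "HOL-Analysis.Analysis"
begin

text \<open>An RKHS H of functions on a set Xs is represented by a real Hilbert space type 'h
 together with the canonical feature map kx (kx x is the representer of evaluation at x).
 An element f of 'h is the function (\<lambda>x. f \<bullet> kx x); the density condition makes this
 identification injective, so 'h is exactly a Hilbert space of functions on Xs with
 reproducing kernel kappa x x' = kx x \<bullet> kx x'.\<close>
definition rkhs_feature :: "'x set \<Rightarrow> ('x \<Rightarrow> 'h::{real_inner,complete_space}) \<Rightarrow> bool" where
  "rkhs_feature Xs kx \<longleftrightarrow> (\<forall>f. (\<forall>x\<in>Xs. f \<bullet> kx x = 0) \<longrightarrow> f = 0)"

definition rkhs_eval :: "('x \<Rightarrow> 'h::real_inner) \<Rightarrow> 'h \<Rightarrow> 'x \<Rightarrow> real" where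
  "rkhs_eval kx f x = f \<bullet> kx x"

definition kern :: "('x \<Rightarrow> 'h::real_inner) \<Rightarrow> 'x \<Rightarrow> 'x \<Rightarrow> real" where
  "kern kx x x' = kx x \<bullet> kx x'"

text \<open>Regularized empirical risk on the augmented data set D^y = D \<union> {(X (n+1), y)},
 data indexed by 1..n.\<close>
definition reg_risk ::
  "(real \<Rightarrow> real \<Rightarrow> real) \<Rightarrow> real \<Rightarrow> ('x \<Rightarrow> 'h::real_inner) \<Rightarrow> nat \<Rightarrow> (nat \<Rightarrow> 'x) \<Rightarrow> (nat \<Rightarrow> real)
    \<Rightarrow> real \<Rightarrow> 'h \<Rightarrow> real" where
  "reg_risk loss lam kx n X Y y f =
     (1 / real (n+1)) * ((\<Sum>i=1..n. loss (Y i) (rkhs_eval kx f (X i))) + loss y (rkhs_eval kx f (X (n+1))))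
     + lam * (norm f)\<^sup>2"

definition is_minimizer :: "('h \<Rightarrow> real) \<Rightarrow> 'h \<Rightarrow> bool" where
  "is_minimizer F f \<longleftrightarrow> (\<forall>g. F f \<le> F g)"

definition C2 :: "(real \<Rightarrow> real) \<Rightarrow> bool" where
  "C2 g \<longleftrightarrow> (\<exists>g' g''. (\<forall>u. (g has_real_derivative g' u) (at u))
                    \<and> (\<forall>u. (g' has_real_derivative g'' u) (at u))
                    \<and> continuous_on UNIV g'')"

definition d2 :: "(real \<Rightarrow> real \<Rightarrow> real) \<Rightarrow> real \<Rightarrow> real \<Rightarrow> real" where
  "d2 loss y u = deriv (\<lambda>v. loss y v) u"

end

theory Submission
  imports Defs
begin

lemma line_deriv:
  assumes "\<And>u. (g has_real_derivative g' u) (at u)"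
  shows "((\<lambda>t. g (a + t*b)) has_real_derivative g' a * b) (at 0)"
proof -
  have 1: "((\<lambda>t. a + t*b) has_real_derivative b) (at 0)"
    by (auto intro!: derivative_eq_intros)
  have "((\<lambda>t. g (a + t*b)) has_real_derivative g' (a + 0*b) * b) (at 0)"
    by (rule DERIV_chain2[OF assms 1])
  then show ?thesis by simp
qed

lemma mono_deriv:
  fixes g :: "real \<Rightarrow> real"
  assumes c: "convex_on UNIV g" and D: "\<And>u. (g has_real_derivative g' u) (at u)"
  shows "(g' a - g' b) * (a - b) \<ge> 0"
proof -
  have "g a - g b \<ge> g' b * (a - b)"
    by (rule convex_on_imp_above_tangent[OF c]) (use D in auto)
  moreover have "g b - g a \<ge> g' a * (b - a)"
    by (rule convex_on_imp_above_tangent[OF c]) (use D in auto)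
  ultimately show ?thesis by (simp add: algebra_simps)
qed

lemma foc:
  fixes kx :: "'x \<Rightarrow> 'h::real_inner"
  assumes min: "is_minimizer (reg_risk loss lam kx n X Y w) f"
   and D: "\<And>y' u. y' \<in> insert w (Y ` {1..n}) \<Longrightarrow> (loss y' has_real_derivative L y' u) (at u)"
  shows "(1/real(n+1)) * ((\<Sum>i=1..n. L (Y i) (f \<bullet> kx (X i)) * (d \<bullet> kx (X i)))
           + L w (f \<bullet> kx (X (n+1))) * (d \<bullet> kx (X (n+1)))) + 2*lam*(f \<bullet> d) = 0"
proof -
  define \<phi> where "\<phi> t = reg_risk loss lam kx n X Y w (f + t *\<^sub>R d)" for t
  have phi: "\<phi> = (\<lambda>t. (1 / real (n+1)) * ((\<Sum>i=1..n. loss (Y i) (f \<bullet> kx (X i) + t * (d \<bullet> kx (X i))))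
      + loss w (f \<bullet> kx (X (n+1)) + t * (d \<bullet> kx (X (n+1)))))
     + lam * (f \<bullet> f + t * (2 * (f \<bullet> d)) + t^2 * (d \<bullet> d)))"
  proof (rule ext)
    fix t :: real
    have "(norm (f + t *\<^sub>R d))\<^sup>2 = f \<bullet> f + t * (2 * (f \<bullet> d)) + t^2 * (d \<bullet> d)"
      unfolding power2_norm_eq_inner
      by (simp add: inner_add_left inner_add_right algebra_simps power2_eq_square inner_commute)
    then show "\<phi> t = (1 / real (n+1)) * ((\<Sum>i=1..n. loss (Y i) (f \<bullet> kx (X i) + t * (d \<bullet> kx (X i))))
      + loss w (f \<bullet> kx (X (n+1)) + t * (d \<bullet> kx (X (n+1)))))
     + lam * (f \<bullet> f + t * (2 * (f \<bullet> d)) + t^2 * (d \<bullet> d))"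
      unfolding \<phi>_def reg_risk_def rkhs_eval_def
      by (simp add: inner_add_left)
  qed
  have der: "(\<phi> has_real_derivative (1/real(n+1)) * ((\<Sum>i=1..n. L (Y i) (f \<bullet> kx (X i)) * (d \<bullet> kx (X i)))
           + L w (f \<bullet> kx (X (n+1))) * (d \<bullet> kx (X (n+1)))) + lam * (2*(f \<bullet> d))) (at 0)"
  proof -
    have h1: "((\<lambda>t. \<Sum>i=1..n. loss (Y i) (f \<bullet> kx (X i) + t * (d \<bullet> kx (X i))))
        has_real_derivative (\<Sum>i=1..n. L (Y i) (f \<bullet> kx (X i)) * (d \<bullet> kx (X i)))) (at 0)"
      by (rule DERIV_sum, rule line_deriv, rule D) auto
    have h2: "((\<lambda>t. loss w (f \<bullet> kx (X (n+1)) + t * (d \<bullet> kx (X (n+1)))))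
        has_real_derivative L w (f \<bullet> kx (X (n+1))) * (d \<bullet> kx (X (n+1)))) (at 0)"
      by (rule line_deriv, rule D) auto
    have h4: "((\<lambda>t. lam * (f \<bullet> f + t * (2 * (f \<bullet> d)) + t^2 * (d \<bullet> d)))
        has_real_derivative lam * (2*(f \<bullet> d))) (at 0)"
      by (auto intro!: derivative_eq_intros)
    show ?thesis unfolding phi
      by (rule DERIV_add[OF DERIV_cmult[OF DERIV_add[OF h1 h2]] h4])
  qed
  have "\<forall>t. \<bar>0 - t\<bar> < 1 \<longrightarrow> \<phi> 0 \<le> \<phi> t"
    using min unfolding is_minimizer_def \<phi>_def by auto
  from DERIV_local_min[OF der zero_less_one this] show ?thesis by simp
qed

theorem theorem13:
  fixes Xs :: "(real ^ 'd) set" and Ys :: "real set"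
    and X :: "nat \<Rightarrow> real ^ 'd" and Y :: "nat \<Rightarrow> real" and n :: nat
    and kx :: "real ^ 'd \<Rightarrow> 'h::{real_inner,complete_space}"
    and loss :: "real \<Rightarrow> real \<Rightarrow> real" and s :: "real \<Rightarrow> real \<Rightarrow> real"
    and lam \<gamma> z y :: real and fy fz :: 'h
  assumes H: "rkhs_feature Xs kx"
    and data: "\<forall>i\<in>{1..n+1}. X i \<in> Xs" "\<forall>i\<in>{1..n}. Y i \<in> Ys"
    and lam: "lam > 0"
    and s_nonneg: "\<forall>a b. s a b \<ge> 0"
    and loss_convex: "\<forall>y'\<in>Ys. convex_on UNIV (loss y')"
    and loss_C2: "\<forall>y'\<in>Ys. C2 (loss y')"
    and gam: "\<gamma> > 0"
    and s_lip: "\<forall>y'\<in>Ys. \<gamma>-lipschitz_on UNIV (s y')"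
    and z: "z \<in> Ys" and y: "y \<in> Ys"
    and fy: "is_minimizer (reg_risk loss lam kx n X Y y) fy"
    and fz: "is_minimizer (reg_risk loss lam kx n X Y z) fz"
  shows
    "let \<rho> = (1/2) * \<bar>- d2 loss z (rkhs_eval kx fz (X (n+1))) + d2 loss y (rkhs_eval kx fz (X (n+1)))\<bar>;
         \<tau> = (\<lambda>i. sqrt (kern kx (X i) (X i)) * sqrt (kern kx (X (n+1)) (X (n+1)))
                   * (\<gamma> * \<rho>) / (lam * real (n+1)))
     in (\<forall>i\<in>{1..n}. \<bar>s (Y i) (rkhs_eval kx fy (X i)) - s (Y i) (rkhs_eval kx fz (X i))\<bar> \<le> \<tau> i)
        \<and> \<bar>s y (rkhs_eval kx fy (X (n+1))) - s y (rkhs_eval kx fz (X (n+1)))\<bar> \<le> \<tau> (n+1)"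
  proof -
  define L where "L = d2 loss"
  have Lder: "(loss y' has_real_derivative L y' u) (at u)" if "y' \<in> Ys" for y' u
  proof -
    from loss_C2 that obtain g' where g': "\<And>u. (loss y' has_real_derivative g' u) (at u)"
      unfolding C2_def by blast
    have "L y' u = g' u" unfolding L_def d2_def using DERIV_imp_deriv[OF g'] by simp
    with g' show ?thesis by simp
  qed
  have Ymem: "Y i \<in> Ys" if "i \<in> {1..n}" for i using data(2) that by blast
  define d where "d = fy - fz"
  define N where "N = real (n+1)"
  have N: "N > 0" unfolding N_def by simp
  define k where "k = kx (X (n+1))"
  define A where "A i = (L (Y i) (fy \<bullet> kx (X i)) - L (Y i) (fz \<bullet> kx (X i))) * (d \<bullet> kx (X i))" for i
  have E1: "(1/N) * ((\<Sum>i=1..n. L (Y i) (fy \<bullet> kx (X i)) * (d \<bullet> kx (X i)))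
           + L y (fy \<bullet> k) * (d \<bullet> k)) + 2*lam*(fy \<bullet> d) = 0"
    unfolding N_def k_def
    by (rule foc[OF fy]) (use Lder y Ymem in auto)
  have E2: "(1/N) * ((\<Sum>i=1..n. L (Y i) (fz \<bullet> kx (X i)) * (d \<bullet> kx (X i)))
           + L z (fz \<bullet> k) * (d \<bullet> k)) + 2*lam*(fz \<bullet> d) = 0"
    unfolding N_def k_def
    by (rule foc[OF fz]) (use Lder z Ymem in auto)
  have sumdiff: "(\<Sum>i=1..n. L (Y i) (fy \<bullet> kx (X i)) * (d \<bullet> kx (X i))) - (\<Sum>i=1..n. L (Y i) (fz \<bullet> kx (X i)) * (d \<bullet> kx (X i)))
     = (\<Sum>i=1..n. A i)"
    unfolding A_def by (simp add: sum_subtractf[symmetric] algebra_simps)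
  have Anon: "(\<Sum>i=1..n. A i) \<ge> 0"
  proof (rule sum_nonneg)
    fix i assume i: "i \<in> {1..n}"
    have "d \<bullet> kx (X i) = fy \<bullet> kx (X i) - fz \<bullet> kx (X i)" unfolding d_def by (simp add: inner_diff_left)
    then show "A i \<ge> 0" unfolding A_def
      using mono_deriv[OF loss_convex[rule_format, OF Ymem[OF i]] Lder[OF Ymem[OF i]]] by simp
  qed
  have Bnon: "(L y (fy \<bullet> k) - L y (fz \<bullet> k)) * (d \<bullet> k) \<ge> 0"
  proof -
    have "d \<bullet> k = fy \<bullet> k - fz \<bullet> k" unfolding d_def by (simp add: inner_diff_left)
    then show ?thesis using mono_deriv[OF loss_convex[rule_format, OF y] Lder[OF y]] by simp
  qed
  have dd: "fy \<bullet> d - fz \<bullet> d = d \<bullet> d" unfolding d_def by (simp add: inner_diff_left)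
  define r where "r = (1/2) * \<bar>- L z (fz \<bullet> k) + L y (fz \<bullet> k)\<bar>"
  have key: "2*lam*(d \<bullet> d) \<le> (1/N) * ((L z (fz \<bullet> k) - L y (fz \<bullet> k)) * (d \<bullet> k))"
  proof -
    have "(1/N) * ((\<Sum>i=1..n. A i) + (L y (fy \<bullet> k) - L y (fz \<bullet> k)) * (d \<bullet> k)
          + (L y (fz \<bullet> k) - L z (fz \<bullet> k)) * (d \<bullet> k)) + 2*lam*(d \<bullet> d) = 0"
      using arg_cong2[where f="(-)", OF E1 E2] sumdiff dd
      by (simp add: algebra_simps add_divide_distrib diff_divide_distrib)
    moreover have "(1/N) * ((\<Sum>i=1..n. A i) + (L y (fy \<bullet> k) - L y (fz \<bullet> k)) * (d \<bullet> k)) \<ge> 0"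
      using Anon Bnon N by simp
    ultimately show ?thesis by (simp add: algebra_simps)
  qed
  also have "\<dots> \<le> (1/N) * (2 * r * (norm d * norm k))"
  proof -
    have "(L z (fz \<bullet> k) - L y (fz \<bullet> k)) * (d \<bullet> k) \<le> \<bar>L z (fz \<bullet> k) - L y (fz \<bullet> k)\<bar> * \<bar>d \<bullet> k\<bar>"
      by (metis abs_ge_self abs_mult)
    also have "\<dots> \<le> \<bar>L z (fz \<bullet> k) - L y (fz \<bullet> k)\<bar> * (norm d * norm k)"
      by (rule mult_left_mono[OF Cauchy_Schwarz_ineq2]) simp
    finally show ?thesis unfolding r_def using N by (simp add: divide_right_mono abs_minus_commute)
  qed
  finally have key2: "2*lam*(norm d)^2 \<le> (1/N) * (2 * r * (norm d * norm k))"
    by (simp add: power2_norm_eq_inner)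
  have nd: "norm d \<le> r * norm k / (lam * N)"
  proof (cases "norm d = 0")
    case True then show ?thesis using lam N r_def by simp
  next
    case False
    then have pos: "norm d > 0" by simp
    from key2 have "(2*lam*norm d) * norm d \<le> (2 * r * norm k / N) * norm d"
      by (simp add: power2_eq_square algebra_simps)
    then have "2*lam*norm d \<le> 2 * r * norm k / N" using pos by (rule mult_right_le_imp_le)
    then show ?thesis using lam N by (simp add: field_simps)
  qed
  have bound: "\<bar>s w (fy \<bullet> kx x) - s w (fz \<bullet> kx x)\<bar> \<le> norm (kx x) * norm k * (\<gamma> * r) / (lam * N)"
    if "w \<in> Ys" for w x
  proof -
    have "\<bar>s w (fy \<bullet> kx x) - s w (fz \<bullet> kx x)\<bar> \<le> \<gamma> * \<bar>fy \<bullet> kx x - fz \<bullet> kx x\<bar>"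
      using lipschitz_onD[OF s_lip[rule_format, OF that], of "fy \<bullet> kx x" "fz \<bullet> kx x"]
      by (simp add: dist_real_def)
    also have "\<bar>fy \<bullet> kx x - fz \<bullet> kx x\<bar> = \<bar>d \<bullet> kx x\<bar>" unfolding d_def by (simp add: inner_diff_left)
    also have "\<dots> \<le> norm d * norm (kx x)" by (rule Cauchy_Schwarz_ineq2)
    also have "\<dots> \<le> (r * norm k / (lam * N)) * norm (kx x)"
      by (rule mult_right_mono[OF nd]) simp
    finally show ?thesis using gam by (simp add: mult_left_mono field_simps)
  qed
  have sq: "sqrt (kern kx x x) = norm (kx x)" for x
    unfolding kern_def by (simp add: norm_eq_sqrt_inner)
  show ?thesis
    unfolding Let_def sq rkhs_eval_def
    using bound[OF Ymem] bound[OF y]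
    unfolding r_def L_def k_def N_def by auto
qed

end
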